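(* Let $0<\alpha<10^{-5}$ and let $G$ be a graph with $n$ vertices and $m$ edges, where $m\ge\left(\frac14-\alpha\right)n^2$. Then either \[ bk(G)>\left(\frac16-2\alpha^{1/3}\right)n, \] or $G$ contains an induced bipartite subgraph $G_1$ with at least $\left(1-\alpha^{1/3}\right)n$ vertices and minimum degree \[ \delta(G_1)\ge\left(\frac12-4\alpha^{1/3}\right)n. \]
   Context: A book of size $q$ is a set of $q$ triangles sharing a common edge; the booksize $bk(G)$ is the size of the largest book in $G$, i.e. the maximum over edges $uv$ of the number of common neighbours of $u$ and $v$. $\delta(H)$ is the minimum degree of a graph $H$. *)

theory Defs
  imports Complex_Main
begin

definition simple_graph :: "'a set \<Rightarrow> ('a \<Rightarrow> 'a \<Rightarrow> bool) \<Rightarrow> bool" where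
  "simple_graph V E \<longleftrightarrow> finite V \<and> (\<forall>u v. E u v \<longrightarrow> u \<in> V \<and> v \<in> V) \<and>
     (\<forall>u v. E u v \<longrightarrow> E v u) \<and> (\<forall>v. \<not> E v v)"

definition edges :: "'a set \<Rightarrow> ('a \<Rightarrow> 'a \<Rightarrow> bool) \<Rightarrow> 'a set set" where
  "edges V E = {{u, v} | u v. u \<in> V \<and> v \<in> V \<and> E u v}"

definition common_nbrs :: "'a set \<Rightarrow> ('a \<Rightarrow> 'a \<Rightarrow> bool) \<Rightarrow> 'a \<Rightarrow> 'a \<Rightarrow> nat" where
  "common_nbrs V E u v = card {w \<in> V. E u w \<and> E v w}"

definition booksize :: "'a set \<Rightarrow> ('a \<Rightarrow> 'a \<Rightarrow> bool) \<Rightarrow> nat" where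
  "booksize V E = Max (insert 0 {common_nbrs V E u v | u v. u \<in> V \<and> v \<in> V \<and> E u v})"

definition induced_bipartite :: "'a set \<Rightarrow> ('a \<Rightarrow> 'a \<Rightarrow> bool) \<Rightarrow> bool" where
  "induced_bipartite S E \<longleftrightarrow> (\<exists>A B. A \<union> B = S \<and> A \<inter> B = {} \<and>
     (\<forall>u\<in>A. \<forall>v\<in>A. \<not> E u v) \<and> (\<forall>u\<in>B. \<forall>v\<in>B. \<not> E u v))"

definition deg_in :: "'a set \<Rightarrow> ('a \<Rightarrow> 'a \<Rightarrow> bool) \<Rightarrow> 'a \<Rightarrow> nat" where
  "deg_in S E v = card {u \<in> S. E v u}"

end

theory Submission
  imports Defs
begin

locale sgraph =
  fixes V :: "'a set" and E :: "'a \<Rightarrow> 'a \<Rightarrow> bool"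
  assumes finV: "finite V" and inV: "E u v \<Longrightarrow> u \<in> V \<and> v \<in> V"
    and symE: "E u v \<Longrightarrow> E v u" and irrE: "\<not> E v v"
begin

definition nb where "nb x = {w\<in>V. E x w}"
definition dg :: "'a \<Rightarrow> real" where "dg x = real (card (nb x))"
definition cm :: "'a \<Rightarrow> 'a \<Rightarrow> real" where "cm x y = real (card (nb x \<inter> nb y))"
definition ind :: "'a \<Rightarrow> 'a \<Rightarrow> real" where "ind u v = (if E u v then 1 else 0)"
definition J :: "'a \<Rightarrow> 'a \<Rightarrow> 'a \<Rightarrow> real" where "J u v w = ind u v * ind v w * ind u w"

lemma fin_nb: "finite (nb x)" using finV by (simp add: nb_def)

lemma ind_sym: "ind u v = ind v u" using symE by (auto simp: ind_def)
lemma ind_nonneg: "0 \<le> ind u v" by (simp add: ind_def of_bool_def)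
lemma J_rot: "J v w u = J u v w" by (simp add: J_def ind_sym algebra_simps)
lemma J_swap: "J v u w = J u v w" by (simp add: J_def ind_sym algebra_simps)
lemma J_nonneg: "0 \<le> J u v w" by (simp add: J_def ind_def)

lemma dg_sum: "dg u = (\<Sum>v\<in>V. ind u v)"
proof -
  have "(\<Sum>v\<in>V. ind u v) = (\<Sum>v\<in>V. of_bool (E u v))" by (simp add: ind_def of_bool_def)
  also have "\<dots> = real (card (V \<inter> {v. E u v}))" using finV by simp
  also have "V \<inter> {v. E u v} = nb u" by (auto simp: nb_def)
  finally show ?thesis by (simp add: dg_def)
qed

lemma cm_sum: "cm u v = (\<Sum>w\<in>V. ind u w * ind v w)"
proof -
  have "(\<Sum>w\<in>V. ind u w * ind v w) = (\<Sum>w\<in>V. of_bool (E u w \<and> E v w))" by (intro sum.cong refl) (simp add: ind_def)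
  also have "\<dots> = real (card (V \<inter> {w. E u w \<and> E v w}))" using finV by simp
  also have "V \<inter> {w. E u w \<and> E v w} = nb u \<inter> nb v" by (auto simp: nb_def)
  finally show ?thesis by (simp add: cm_def)
qed

lemma cm_sym: "cm u v = cm v u" by (simp add: cm_def Int_commute)
lemma cm_nonneg: "0 \<le> cm u v" by (simp add: cm_def)

lemma dg_le: "dg u \<le> real (card V)"
  unfolding dg_def by (simp add: card_mono finV nb_def)

lemma tri_ineq: "dg u + dg v + dg w \<le> real (card V) + cm u v + cm v w + cm u w"
proof -
  let ?A = "nb u" and ?B = "nb v" and ?C = "nb w"
  have f: "finite ?A" "finite ?B" "finite ?C" by (simp_all add: fin_nb)
  have 1: "card (?A \<union> ?B) + card (?A \<inter> ?B) = card ?A + card ?B" using card_Un_Int[OF f(1) f(2)] by simp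
  have 2: "card (?A \<union> ?B \<union> ?C) + card ((?A \<union> ?B) \<inter> ?C) = card (?A \<union> ?B) + card ?C"
    using card_Un_Int[of "?A \<union> ?B" ?C] f by simp
  have 3: "(?A \<union> ?B) \<inter> ?C = (?A \<inter> ?C) \<union> (?B \<inter> ?C)" by blast
  have 4: "card ((?A \<inter> ?C) \<union> (?B \<inter> ?C)) \<le> card (?A \<inter> ?C) + card (?B \<inter> ?C)" by (rule card_Un_le)
  have 5: "card (?A \<union> ?B \<union> ?C) \<le> card V" by (rule card_mono[OF finV]) (auto simp: nb_def)
  have "card ?A + card ?B + card ?C \<le> card V + card (?A \<inter> ?B) + card (?B \<inter> ?C) + card (?A \<inter> ?C)"
  proof -
    have 6: "card (?A \<union> ?B \<union> ?C) + card ((?A \<inter> ?C) \<union> (?B \<inter> ?C)) = card (?A \<union> ?B) + card ?C"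
      using 2 3 by simp
    show ?thesis using 1 4 5 6 by linarith
  qed
  then have "real (card ?A + card ?B + card ?C) \<le> real (card V + card (?A \<inter> ?B) + card (?B \<inter> ?C) + card (?A \<inter> ?C))"
    by linarith
  then show ?thesis by (simp add: dg_def cm_def)
qed

lemma edge_ineq: "dg u + dg v \<le> real (card V) + cm u v"
proof -
  have f: "finite (nb u)" "finite (nb v)" by (simp_all add: fin_nb)
  have 1: "card (nb u \<union> nb v) + card (nb u \<inter> nb v) = card (nb u) + card (nb v)" using card_Un_Int[OF f(1) f(2)] by simp
  have 5: "card (nb u \<union> nb v) \<le> card V" by (rule card_mono[OF finV]) (auto simp: nb_def)
  have "card (nb u) + card (nb v) \<le> card V + card (nb u \<inter> nb v)" using 1 5 by linarith
  then have "real (card (nb u) + card (nb v)) \<le> real (card V + card (nb u \<inter> nb v))" by linarith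
  then show ?thesis by (simp add: dg_def cm_def)
qed

lemma swap2: "(\<Sum>u\<in>V. \<Sum>v\<in>V. G u v) = (\<Sum>u\<in>V. \<Sum>v\<in>V. (G v u :: real))"
  by (rule sum.swap)

lemma rot3: "(\<Sum>u\<in>V. \<Sum>v\<in>V. \<Sum>w\<in>V. F u v w) = (\<Sum>u\<in>V. \<Sum>v\<in>V. \<Sum>w\<in>V. (F v w u :: real))"
proof -
  have "(\<Sum>u\<in>V. \<Sum>v\<in>V. \<Sum>w\<in>V. F u v w) = (\<Sum>u\<in>V. \<Sum>w\<in>V. \<Sum>v\<in>V. F u v w)"
    by (rule sum.cong[OF refl], rule sum.swap)
  also have "\<dots> = (\<Sum>w\<in>V. \<Sum>u\<in>V. \<Sum>v\<in>V. F u v w)" by (rule sum.swap)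
  finally show ?thesis .
qed

lemma J_inner: "(\<Sum>w\<in>V. J u v w * f u v) = ind u v * f u v * cm u v"
proof -
  have "(\<Sum>w\<in>V. J u v w * f u v) = (\<Sum>w\<in>V. (ind u v * f u v) * (ind u w * ind v w))"
    unfolding J_def by (simp only: mult_ac)
  also have "\<dots> = ind u v * f u v * (\<Sum>w\<in>V. ind u w * ind v w)" by (rule sum_distrib_left[symmetric])
  also have "\<dots> = ind u v * f u v * cm u v" by (simp only: cm_sum)
  finally show ?thesis .
qed


lemma J_inner_sum: "(\<Sum>u\<in>V. \<Sum>v\<in>V. \<Sum>w\<in>V. J u v w * f u v) = (\<Sum>u\<in>V. \<Sum>v\<in>V. ind u v * f u v * cm u v)"
  by (simp only: J_inner)

lemma main_ineq:
  assumes bk: "\<And>u v. E u v \<Longrightarrow> cm u v \<le> real (card V) / 6"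
  shows "(\<Sum>u\<in>V. dg u ^ 2) \<le> real (card V) * (\<Sum>u\<in>V. dg u) / 2"
proof -
  define n where "n = real (card V)"
  define K where "K = n / 6"
  define M where "M = (\<Sum>u\<in>V. \<Sum>v\<in>V. ind u v)"
  define A where "A = (\<Sum>u\<in>V. \<Sum>v\<in>V. ind u v * dg u)"
  define X where "X = (\<Sum>u\<in>V. \<Sum>v\<in>V. ind u v * dg u * cm u v)"
  define Y where "Y = (\<Sum>u\<in>V. \<Sum>v\<in>V. ind u v * cm u v)"
  define Z where "Z = (\<Sum>u\<in>V. \<Sum>v\<in>V. ind u v * cm u v * cm u v)"
  have M_eq: "M = (\<Sum>u\<in>V. dg u)" by (simp add: M_def dg_sum)
  have A_eq: "A = (\<Sum>u\<in>V. dg u ^ 2)"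
  proof -
    have "A = (\<Sum>u\<in>V. dg u * (\<Sum>v\<in>V. ind u v))"
      by (simp add: A_def sum_distrib_left mult.commute)
    also have "\<dots> = (\<Sum>u\<in>V. dg u ^ 2)" by (simp add: dg_sum[symmetric] power2_eq_square)
    finally show ?thesis .
  qed
  have A'_eq: "(\<Sum>u\<in>V. \<Sum>v\<in>V. ind u v * dg v) = A"
    unfolding A_def by (subst swap2) (simp add: ind_sym)
  have X'_eq: "(\<Sum>u\<in>V. \<Sum>v\<in>V. ind u v * dg v * cm u v) = X"
    unfolding X_def by (subst swap2) (simp add: ind_sym cm_sym)
  have t1: "(\<Sum>u\<in>V. \<Sum>v\<in>V. \<Sum>w\<in>V. J u v w * n) = n * Y"
    using J_inner_sum[of "\<lambda>u v. n"] by (simp add: Y_def sum_distrib_left algebra_simps)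
  have t2: "(\<Sum>u\<in>V. \<Sum>v\<in>V. \<Sum>w\<in>V. J u v w * dg u) = X"
    using J_inner_sum[of "\<lambda>u v. dg u"] by (simp add: X_def)
  have t3: "(\<Sum>u\<in>V. \<Sum>v\<in>V. \<Sum>w\<in>V. J u v w * dg v) = X"
  proof -
    have "(\<Sum>u\<in>V. \<Sum>v\<in>V. \<Sum>w\<in>V. J u v w * dg v) = (\<Sum>u\<in>V. \<Sum>v\<in>V. \<Sum>w\<in>V. J v u w * dg u)"
      by (rule swap2)
    also have "\<dots> = (\<Sum>u\<in>V. \<Sum>v\<in>V. \<Sum>w\<in>V. J u v w * dg u)" by (simp only: J_swap)
    finally show ?thesis using t2 by simp
  qed
  have t4: "(\<Sum>u\<in>V. \<Sum>v\<in>V. \<Sum>w\<in>V. J u v w * dg w) = X"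
  proof -
    have "(\<Sum>u\<in>V. \<Sum>v\<in>V. \<Sum>w\<in>V. J u v w * dg w) = (\<Sum>u\<in>V. \<Sum>v\<in>V. \<Sum>w\<in>V. J v w u * dg u)"
      by (rule rot3)
    also have "\<dots> = (\<Sum>u\<in>V. \<Sum>v\<in>V. \<Sum>w\<in>V. J u v w * dg u)" by (simp only: J_rot)
    finally show ?thesis using t2 by simp
  qed
  have t5: "(\<Sum>u\<in>V. \<Sum>v\<in>V. \<Sum>w\<in>V. J u v w * cm u v) = Z"
    using J_inner_sum[of "\<lambda>u v. cm u v"] by (simp add: Z_def)
  have t6: "(\<Sum>u\<in>V. \<Sum>v\<in>V. \<Sum>w\<in>V. J u v w * cm u w) = Z"
  proof -
    have "(\<Sum>u\<in>V. \<Sum>v\<in>V. \<Sum>w\<in>V. J u v w * cm u w) = (\<Sum>u\<in>V. \<Sum>v\<in>V. \<Sum>w\<in>V. J v w u * cm v u)"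
      by (rule rot3)
    also have "\<dots> = (\<Sum>u\<in>V. \<Sum>v\<in>V. \<Sum>w\<in>V. J u v w * cm u v)" by (simp only: J_rot) (simp add: cm_sym)
    finally show ?thesis using t5 by simp
  qed
  have t7: "(\<Sum>u\<in>V. \<Sum>v\<in>V. \<Sum>w\<in>V. J u v w * cm v w) = Z"
  proof -
    have "(\<Sum>u\<in>V. \<Sum>v\<in>V. \<Sum>w\<in>V. J u v w * cm v w) = (\<Sum>u\<in>V. \<Sum>v\<in>V. \<Sum>w\<in>V. J v w u * cm w u)"
      by (rule rot3)
    also have "\<dots> = (\<Sum>u\<in>V. \<Sum>v\<in>V. \<Sum>w\<in>V. J u v w * cm u w)" by (simp only: J_rot) (simp add: cm_sym)
    finally show ?thesis using t6 by simp
  qed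
  have tri: "(\<Sum>u\<in>V. \<Sum>v\<in>V. \<Sum>w\<in>V. J u v w * (dg u + dg v + dg w))
      \<le> (\<Sum>u\<in>V. \<Sum>v\<in>V. \<Sum>w\<in>V. J u v w * (n + cm u v + cm v w + cm u w))"
    by (intro sum_mono mult_left_mono J_nonneg) (simp add: n_def tri_ineq)
  have triX: "3 * X \<le> n * Y + 3 * Z"
    using tri t1 t2 t3 t4 t5 t6 t7 by (simp add: distrib_left sum.distrib)
  have edge: "(\<Sum>u\<in>V. \<Sum>v\<in>V. ind u v * ((K - cm u v) * (dg u + dg v)))
      \<le> (\<Sum>u\<in>V. \<Sum>v\<in>V. ind u v * ((K - cm u v) * (n + cm u v)))"
  proof (intro sum_mono)
    fix u v assume "u \<in> V" "v \<in> V"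
    show "ind u v * ((K - cm u v) * (dg u + dg v)) \<le> ind u v * ((K - cm u v) * (n + cm u v))"
    proof (cases "E u v")
      case True
      then have "K - cm u v \<ge> 0" using bk[OF True] by (simp add: K_def n_def)
      then show ?thesis using True edge_ineq[of u v] by (simp add: ind_def n_def mult_left_mono)
    qed (simp add: ind_def)
  qed
  have lhs: "(\<Sum>u\<in>V. \<Sum>v\<in>V. ind u v * ((K - cm u v) * (dg u + dg v))) = 2 * (K * A) - 2 * X"
  proof -
    have "(\<Sum>u\<in>V. \<Sum>v\<in>V. ind u v * ((K - cm u v) * (dg u + dg v)))
       = (\<Sum>u\<in>V. \<Sum>v\<in>V. K * (ind u v * dg u) + K * (ind u v * dg v) - ind u v * dg u * cm u v - ind u v * dg v * cm u v)"
      by (intro sum.cong refl) (simp add: algebra_simps)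
    also have "\<dots> = K * A + K * (\<Sum>u\<in>V. \<Sum>v\<in>V. ind u v * dg v) - X - (\<Sum>u\<in>V. \<Sum>v\<in>V. ind u v * dg v * cm u v)"
      by (simp add: A_def X_def sum.distrib sum_subtractf sum_distrib_left)
    finally show ?thesis using A'_eq X'_eq by simp
  qed
  have rhs: "(\<Sum>u\<in>V. \<Sum>v\<in>V. ind u v * ((K - cm u v) * (n + cm u v))) = K * n * M + K * Y - n * Y - Z"
  proof -
    have "(\<Sum>u\<in>V. \<Sum>v\<in>V. ind u v * ((K - cm u v) * (n + cm u v)))
       = (\<Sum>u\<in>V. \<Sum>v\<in>V. (K * n) * ind u v + K * (ind u v * cm u v) - n * (ind u v * cm u v) - ind u v * cm u v * cm u v)"
      by (intro sum.cong refl) (simp add: algebra_simps)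
    also have "\<dots> = K * n * M + K * Y - n * Y - Z"
      by (simp add: M_def Y_def Z_def sum.distrib sum_subtractf sum_distrib_left)
    finally show ?thesis .
  qed
  have ZY: "Z \<le> K * Y"
  proof -
    have "Z \<le> (\<Sum>u\<in>V. \<Sum>v\<in>V. K * (ind u v * cm u v))"
      unfolding Z_def
    proof (intro sum_mono)
      fix u v assume "u \<in> V" "v \<in> V"
      show "ind u v * cm u v * cm u v \<le> K * (ind u v * cm u v)"
      proof (cases "E u v")
        case True
        then have "cm u v \<le> K" using bk[OF True] by (simp add: K_def n_def)
        then show ?thesis using True cm_nonneg[of u v] by (simp add: ind_def mult_right_mono)
      qed (simp add: ind_def)
    qed
    also have "\<dots> = K * Y" by (simp add: Y_def sum_distrib_left)
    finally show ?thesis .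
  qed
  have main: "2 * (K * A) \<le> K * n * M + 2 * (K * Y) - n * Y / 3"
    using edge lhs rhs ZY triX by linarith
  have e1: "2 * (K * A) = n * A / 3" and e2: "K * n * M = n * (n * M) / 6" and e3: "2 * (K * Y) = n * Y / 3"
    by (simp_all add: K_def)
  from main e1 e2 e3 have "n * A / 3 \<le> n * (n * M) / 6" by linarith
  then have "n * A \<le> n * (n * M / 2)" by (simp add: algebra_simps)
  then have "A \<le> n * M / 2"
  proof (cases "n = 0")
    case True
    then have "V = {}" using finV by (simp add: n_def)
    then show ?thesis by (simp add: A_def M_def)
  next
    case False
    then have "n > 0" by (simp add: n_def)
    then show ?thesis using \<open>n * A \<le> n * (n * M / 2)\<close> by (simp add: mult_le_cancel_left_pos)
  qed
  then show ?thesis by (simp add: A_eq M_eq n_def)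
qed


lemma fin_edges: "finite (edges V E)"
proof -
  have "edges V E \<subseteq> Pow V" by (auto simp: edges_def)
  then show ?thesis using finV finite_subset by blast
qed

lemma card_edge: "e \<in> edges V E \<Longrightarrow> card e = 2"
  using irrE by (auto simp: edges_def card_insert_if)

lemma edge_sub: "e \<in> edges V E \<Longrightarrow> e \<subseteq> V"
  by (auto simp: edges_def)

lemma card_star: "card (edges V E \<inter> {e. u \<in> e}) = card (nb u)"
proof -
  have img: "edges V E \<inter> {e. u \<in> e} = (\<lambda>v. {u, v}) ` nb u"
  proof
    show "edges V E \<inter> {e. u \<in> e} \<subseteq> (\<lambda>v. {u, v}) ` nb u"
    proof
      fix e assume "e \<in> edges V E \<inter> {e. u \<in> e}"
      then obtain a b where e: "e = {a, b}" "a \<in> V" "b \<in> V" "E a b" and ue: "u \<in> e"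
        by (auto simp: edges_def)
      show "e \<in> (\<lambda>v. {u, v}) ` nb u"
      proof (cases "u = a")
        case True
        then show ?thesis using e by (auto simp: nb_def)
      next
        case False
        then have "u = b" using ue e by auto
        then have "e = {u, a}" "a \<in> nb u" using e symE by (auto simp: nb_def)
        then show ?thesis by blast
      qed
    qed
    show "(\<lambda>v. {u, v}) ` nb u \<subseteq> edges V E \<inter> {e. u \<in> e}"
      using inV by (auto simp: nb_def edges_def)
  qed
  have inj: "inj_on (\<lambda>v. {u, v}) (nb u)"
  proof (rule inj_onI)
    fix v w assume v: "v \<in> nb u" and w: "w \<in> nb u" and eq: "{u, v} = {u, w}"
    have "v \<noteq> u" "w \<noteq> u" using v w irrE by (auto simp: nb_def)
    then show "v = w" using eq by (auto simp: doubleton_eq_iff)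
  qed
  show ?thesis using img card_image[OF inj] by simp
qed

lemma handshake: "(\<Sum>u\<in>V. dg u) = 2 * real (card (edges V E))"
proof -
  have "(\<Sum>e\<in>edges V E. card e) = (\<Sum>e\<in>edges V E. \<Sum>u\<in>V. (of_bool (u \<in> e) :: nat))"
  proof (intro sum.cong refl)
    fix e assume e: "e \<in> edges V E"
    have "(\<Sum>u\<in>V. (of_bool (u \<in> e) :: nat)) = card (V \<inter> {u. u \<in> e})" using finV by simp
    also have "V \<inter> {u. u \<in> e} = e" using edge_sub[OF e] by auto
    finally show "card e = (\<Sum>u\<in>V. (of_bool (u \<in> e) :: nat))" by simp
  qed
  also have "\<dots> = (\<Sum>u\<in>V. \<Sum>e\<in>edges V E. (of_bool (u \<in> e) :: nat))" by (rule sum.swap)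
  also have "\<dots> = (\<Sum>u\<in>V. card (edges V E \<inter> {e. u \<in> e}))" using fin_edges by simp
  also have "\<dots> = (\<Sum>u\<in>V. card (nb u))" by (simp only: card_star)
  finally have 1: "(\<Sum>e\<in>edges V E. card e) = (\<Sum>u\<in>V. card (nb u))" .
  have 2: "(\<Sum>e\<in>edges V E. card e) = 2 * card (edges V E)"
    using card_edge by simp
  have "(\<Sum>u\<in>V. dg u) = real (\<Sum>u\<in>V. card (nb u))" by (simp add: dg_def)
  also have "\<dots> = real (2 * card (edges V E))" using 1 2 by (simp only:)
  also have "\<dots> = 2 * real (card (edges V E))" by simp
  finally show ?thesis .
qed

lemma cm_common: "cm u v = real (common_nbrs V E u v)"
proof -
  have "nb u \<inter> nb v = {w\<in>V. E u w \<and> E v w}" by (auto simp: nb_def)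
  then show ?thesis by (simp add: cm_def common_nbrs_def)
qed

lemma cm_le_bk: "E u v \<Longrightarrow> cm u v \<le> real (booksize V E)"
proof -
  assume Euv: "E u v"
  have "{common_nbrs V E u v |u v. u \<in> V \<and> v \<in> V \<and> E u v} \<subseteq> (\<lambda>(u, v). common_nbrs V E u v) ` (V \<times> V)"
    by auto
  then have fin: "finite (insert 0 {common_nbrs V E u v |u v. u \<in> V \<and> v \<in> V \<and> E u v})"
    using finV finite_subset by blast
  have "common_nbrs V E u v \<in> insert 0 {common_nbrs V E u v |u v. u \<in> V \<and> v \<in> V \<and> E u v}"
    using Euv inV by blast
  then have "common_nbrs V E u v \<le> booksize V E"
    unfolding booksize_def using fin by (rule Max_ge[rotated])
  then show ?thesis by (simp add: cm_common)
qed


end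



lemma two_disj: "finite T \<Longrightarrow> P \<subseteq> T \<Longrightarrow> Q \<subseteq> T \<Longrightarrow> P \<inter> Q = {} \<Longrightarrow> card P + card Q \<le> card T"
  by (metis card_Un_disjoint card_mono finite_subset le_sup_iff)

lemma bip:
  fixes S :: "'a set" and \<delta> :: real
  assumes fin: "finite S" and sym: "\<And>u v. E u v \<Longrightarrow> E v u"
    and tf: "\<And>u v w. u \<in> S \<Longrightarrow> v \<in> S \<Longrightarrow> w \<in> S \<Longrightarrow> \<not> (E u v \<and> E v w \<and> E u w)"
    and deg: "\<And>v. v \<in> S \<Longrightarrow> \<delta> \<le> real (card {u\<in>S. E v u})"
    and big: "3 * real (card S) < 7 * \<delta>"
  shows "induced_bipartite S E"
proof (cases "S = {}")
  case True
  then show ?thesis unfolding induced_bipartite_def by auto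
next
  case False
  define N where "N z = {u\<in>S. E z u}" for z
  have finN: "finite (N z)" for z using fin by (simp add: N_def)
  have NS: "N z \<subseteq> S" for z by (auto simp: N_def)
  have degN: "z \<in> S \<Longrightarrow> \<delta> \<le> real (card (N z))" for z using deg by (simp add: N_def)
  have cS: "card S > 0" using False fin by (simp add: card_gt_0_iff)
  then have dpos: "\<delta> > 0" using big by linarith
  have disjN: "N p \<inter> N q = {}" if "p \<in> S" "q \<in> S" "E p q" for p q
    using tf[of p q] that by (auto simp: N_def)
  obtain x where x: "x \<in> S" using False by blast
  have "card (N x) > 0" using degN[OF x] dpos by linarith
  then obtain y where y: "y \<in> N x" by (metis card.empty ex_in_conv less_irrefl)
  then have yS: "y \<in> S" and Exy: "E x y" by (auto simp: N_def)
  define X where "X = N y"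
  define Y where "Y = N x"
  define R where "R = S - (X \<union> Y)"
  have XS: "X \<subseteq> S" and YS: "Y \<subseteq> S" and RS: "R \<subseteq> S" by (auto simp: X_def Y_def R_def NS)
  have finX: "finite X" and finY: "finite Y" and finR: "finite R"
    using XS YS RS fin finite_subset by blast+
  have XY: "X \<inter> Y = {}" using disjN[OF x yS Exy] by (auto simp: X_def Y_def)
  have Xind: "\<not> E a a'" if "a \<in> X" "a' \<in> X" for a a'
    using tf[of y a a'] that yS by (auto simp: X_def N_def)
  have Yind: "\<not> E a a'" if "a \<in> Y" "a' \<in> Y" for a a'
    using tf[of x a a'] that x by (auto simp: Y_def N_def)
  have cX: "\<delta> \<le> real (card X)" using degN[OF yS] by (simp add: X_def)
  have cY: "\<delta> \<le> real (card Y)" using degN[OF x] by (simp add: Y_def)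
  have partS: "card X + card Y + card R = card S"
  proof -
    have "S = (X \<union> Y) \<union> R" using XS YS by (auto simp: R_def)
    moreover have "card (X \<union> Y) = card X + card Y" using card_Un_disjoint[OF finX finY XY] .
    moreover have "card ((X \<union> Y) \<union> R) = card (X \<union> Y) + card R"
      by (rule card_Un_disjoint) (use finX finY finR in \<open>auto simp: R_def\<close>)
    ultimately show ?thesis by simp
  qed
  have NX: "N a \<subseteq> (N a \<inter> Y) \<union> R" if "a \<in> X" for a
    using that Xind NS by (auto simp: R_def N_def)
  have NY: "N b \<subseteq> (N b \<inter> X) \<union> R" if "b \<in> Y" for b
    using that Yind NS by (auto simp: R_def N_def)
  have NR: "N r \<subseteq> (N r \<inter> X) \<union> (N r \<inter> Y) \<union> R" for r
    using NS by (auto simp: R_def)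
  have claim1: False if r: "r \<in> R" and a: "a \<in> X" and b: "b \<in> Y" and Era: "E r a" and Erb: "E r b" for r a b
  proof -
    have rS: "r \<in> S" using r RS by blast
    have aS: "a \<in> S" using a XS by blast
    have bS: "b \<in> S" using b YS by blast
    have 1: "card (N r \<inter> Y) + card (N a \<inter> Y) \<le> card Y"
      using two_disj[OF finY, of "N r \<inter> Y" "N a \<inter> Y"] disjN[OF rS aS Era] by auto
    have 2: "card (N r \<inter> X) + card (N b \<inter> X) \<le> card X"
      using two_disj[OF finX, of "N r \<inter> X" "N b \<inter> X"] disjN[OF rS bS Erb] by auto
    have 3: "card (N a) \<le> card (N a \<inter> Y) + card R"
      by (rule order_trans[OF card_mono[OF _ NX[OF a]]]) (use finN finR in \<open>auto intro: card_Un_le\<close>)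
    have 4: "card (N b) \<le> card (N b \<inter> X) + card R"
      by (rule order_trans[OF card_mono[OF _ NY[OF b]]]) (use finN finR in \<open>auto intro: card_Un_le\<close>)
    have 5: "card (N r) \<le> card (N r \<inter> X) + card (N r \<inter> Y) + card R"
    proof -
      have "card (N r) \<le> card ((N r \<inter> X) \<union> (N r \<inter> Y) \<union> R)"
        by (rule card_mono[OF _ NR]) (use finN finR in auto)
      also have "\<dots> \<le> card ((N r \<inter> X) \<union> (N r \<inter> Y)) + card R" by (rule card_Un_le)
      also have "\<dots> \<le> card (N r \<inter> X) + card (N r \<inter> Y) + card R" using card_Un_le by simp
      finally show ?thesis .
    qed
    have "\<delta> \<le> real (card (N r))" "\<delta> \<le> real (card (N a))" "\<delta> \<le> real (card (N b))"
      using degN rS aS bS by auto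
    then show False using 1 2 3 4 5 partS cX cY big by linarith
  qed
  define A' where "A' = X \<union> {r\<in>R. \<forall>a\<in>X. \<not> E r a}"
  define B' where "B' = Y \<union> {r\<in>R. \<exists>a\<in>X. E r a}"
  have indR: False if "r \<in> R" "r' \<in> R" "E r r'" "N r \<subseteq> T \<union> R" "N r' \<subseteq> T \<union> R"
      and T: "T \<subseteq> S" "T \<inter> R = {}" "\<delta> + real (card T) + real (card R) \<le> real (card S)" for r r' T
  proof -
    have rS: "r \<in> S" "r' \<in> S" using that RS by auto
    have finT: "finite T" using T fin finite_subset by blast
    have "card (N r) + card (N r') \<le> card (T \<union> R)"
      using two_disj[of "T \<union> R" "N r" "N r'"] finT finR disjN[OF rS \<open>E r r'\<close>] that by auto
    also have "card (T \<union> R) = card T + card R" using card_Un_disjoint[OF finT finR T(2)] .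
    finally have "card (N r) + card (N r') \<le> card T + card R" .
    moreover have "\<delta> \<le> real (card (N r))" "\<delta> \<le> real (card (N r'))" using degN rS by auto
    ultimately have "2 * \<delta> \<le> real (card S) - \<delta>" using T(3) by linarith
    then show False using big dpos by linarith
  qed
  have "A' \<union> B' = S" using XS YS by (auto simp: A'_def B'_def R_def)
  moreover have "A' \<inter> B' = {}" using XY by (auto simp: A'_def B'_def R_def)
  moreover have "\<forall>u\<in>A'. \<forall>v\<in>A'. \<not> E u v"
  proof (intro ballI notI)
    fix u v assume u: "u \<in> A'" and v: "v \<in> A'" and Euv: "E u v"
    show False
    proof (cases "u \<in> X")
      case uX: True
      show False
      proof (cases "v \<in> X")
        case True then show False using Xind uX Euv by blast
      next
        case False then show False using v uX Euv sym by (auto simp: A'_def)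
      qed
    next
      case uX: False
      then have uR: "u \<in> R" and un: "\<forall>a\<in>X. \<not> E u a" using u by (auto simp: A'_def)
      show False
      proof (cases "v \<in> X")
        case True then show False using un Euv by blast
      next
        case False
        then have vR: "v \<in> R" and vn: "\<forall>a\<in>X. \<not> E v a" using v by (auto simp: A'_def)
        have "N u \<subseteq> Y \<union> R" "N v \<subseteq> Y \<union> R" using NR un vn by (auto simp: N_def)
        moreover have "\<delta> + real (card Y) + real (card R) \<le> real (card S)" using partS cX by linarith
        ultimately show False using indR[OF uR vR Euv, of Y] YS by (auto simp: R_def)
      qed
    qed
  qed
  moreover have "\<forall>u\<in>B'. \<forall>v\<in>B'. \<not> E u v"
  proof (intro ballI notI)
    fix u v assume u: "u \<in> B'" and v: "v \<in> B'" and Euv: "E u v"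
    show False
    proof (cases "u \<in> Y")
      case uY: True
      show False
      proof (cases "v \<in> Y")
        case True then show False using Yind uY Euv by blast
      next
        case False
        then have vR: "v \<in> R" and "\<exists>a\<in>X. E v a" using v by (auto simp: B'_def)
        then obtain a where "a \<in> X" "E v a" by blast
        then show False using claim1[OF vR _ uY] sym[OF Euv] by blast
      qed
    next
      case uY: False
      then have uR: "u \<in> R" and "\<exists>a\<in>X. E u a" using u by (auto simp: B'_def)
      then obtain a where a: "a \<in> X" "E u a" by blast
      have unY: "\<forall>b\<in>Y. \<not> E u b" using claim1[OF uR a(1)] a(2) by blast
      show False
      proof (cases "v \<in> Y")
        case True then show False using unY Euv by blast
      next
        case False
        then have vR: "v \<in> R" and "\<exists>a\<in>X. E v a" using v by (auto simp: B'_def)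
        then obtain a' where a': "a' \<in> X" "E v a'" by blast
        have vnY: "\<forall>b\<in>Y. \<not> E v b" using claim1[OF vR a'(1)] a'(2) by blast
        have "N u \<subseteq> X \<union> R" "N v \<subseteq> X \<union> R" using NR unY vnY by (auto simp: N_def)
        moreover have "\<delta> + real (card X) + real (card R) \<le> real (card S)" using partS cY by linarith
        ultimately show False using indR[OF uR vR Euv, of X] XS by (auto simp: R_def)
      qed
    qed
  qed
  ultimately show ?thesis unfolding induced_bipartite_def by blast
qed


theorem theorem6:
  fixes V :: "'a set" and E :: "'a \<Rightarrow> 'a \<Rightarrow> bool" and \<alpha> :: real
  assumes "simple_graph V E"
    and "0 < \<alpha>" and "\<alpha> < 10 powr (-5)"
    and "real (card (edges V E)) \<ge> (1/4 - \<alpha>) * (real (card V))^2"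
  shows "real (booksize V E) > (1/6 - 2 * \<alpha> powr (1/3)) * real (card V)
     \<or> (\<exists>S \<subseteq> V. induced_bipartite S E
          \<and> real (card S) \<ge> (1 - \<alpha> powr (1/3)) * real (card V)
          \<and> (\<forall>v\<in>S. real (deg_in S E v) \<ge> (1/2 - 4 * \<alpha> powr (1/3)) * real (card V)))"
proof -
  interpret G: sgraph V E using assms(1) unfolding simple_graph_def by unfold_locales auto
  define \<beta> where "\<beta> = \<alpha> powr (1/3)"
  have bpos: "\<beta> > 0" using assms(2) by (simp add: \<beta>_def)
  have b3: "\<beta> ^ 3 = \<alpha>" using assms(2) by (simp add: \<beta>_def powr_power)
  have a5: "\<alpha> < 1/100000" using assms(3) by (simp add: powr_neg_numeral)
  have blt: "\<beta> < 1/40"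
  proof (rule ccontr)
    assume "\<not> \<beta> < 1/40"
    then have "(1/40::real) ^ 3 \<le> \<beta> ^ 3" by (intro power_mono) auto
    then show False using b3 a5 by (simp add: power3_eq_cube)
  qed
  define n where "n = real (card V)"
  define bk where "bk = real (booksize V E)"
  have nn: "n \<ge> 0" by (simp add: n_def)
  have bn0: "\<beta> * n \<ge> 0" using bpos nn by simp
  have goal: "bk > n / 6 - 2 * (\<beta> * n) \<or> (\<exists>S \<subseteq> V. induced_bipartite S E
          \<and> real (card S) \<ge> n - \<beta> * n
          \<and> (\<forall>v\<in>S. real (deg_in S E v) \<ge> n / 2 - 4 * (\<beta> * n)))"
  proof (cases "bk > n / 6 - 2 * (\<beta> * n)")
    case True then show ?thesis by simp
  next
    case False
    then have bkle: "bk \<le> n / 6 - 2 * (\<beta> * n)" by simp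
    have cmB: "G.cm u v \<le> n / 6 - 2 * (\<beta> * n)" if "E u v" for u v
      using G.cm_le_bk[OF that] bkle by (simp add: bk_def)
    have cm6: "G.cm u v \<le> real (card V) / 6" if "E u v" for u v
      using cmB[OF that] bn0 by (simp add: n_def)
    define Ms where "Ms = (\<Sum>u\<in>V. G.dg u)"
    have sq: "(\<Sum>u\<in>V. G.dg u ^ 2) \<le> n * Ms / 2"
      using G.main_ineq[OF cm6] by (simp add: n_def Ms_def)
    have Ms_ge: "Ms \<ge> n^2 / 2 - 2 * \<alpha> * n^2"
      using G.handshake assms(4) by (simp add: Ms_def n_def algebra_simps)
    show ?thesis
    proof (cases "n = 0")
      case True
      then have "V = {}" using G.finV by (simp add: n_def)
      moreover have "induced_bipartite {} E" unfolding induced_bipartite_def by auto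
      ultimately show ?thesis using True by auto
    next
      case False
      then have npos: "n > 0" using nn by simp
      define \<mu> where "\<mu> = Ms / n"
      have var0: "(\<Sum>u\<in>V. (G.dg u - \<mu>)^2) = (\<Sum>u\<in>V. G.dg u ^ 2) - 2 * \<mu> * Ms + n * \<mu>^2"
        by (simp add: power2_diff sum.distrib sum_subtractf sum_distrib_left Ms_def n_def algebra_simps)
      have var: "(\<Sum>u\<in>V. (G.dg u - \<mu>)^2) = (\<Sum>u\<in>V. G.dg u ^ 2) - Ms^2 / n"
        using var0 npos by (simp add: \<mu>_def power2_eq_square field_simps)
      have "0 \<le> (\<Sum>u\<in>V. (G.dg u - \<mu>)^2)" by (simp add: sum_nonneg)
      then have "Ms^2 / n \<le> n * Ms / 2" using var sq by linarith
      then have "Ms * Ms \<le> Ms * (n * n / 2)" using npos by (simp add: field_simps power2_eq_square)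
      moreover have Mspos: "Ms > 0"
      proof -
        have "2 * \<alpha> < 1/2" using a5 by simp
        then have "2 * \<alpha> * n^2 < 1/2 * n^2" using npos by (intro mult_strict_right_mono) auto
        then show ?thesis using Ms_ge by linarith
      qed
      ultimately have Msle: "Ms \<le> n * n / 2" by (simp add: mult_le_cancel_left_pos)
      have varb: "(\<Sum>u\<in>V. (G.dg u - \<mu>)^2) \<le> \<alpha> * n^3"
      proof -
        have "(\<Sum>u\<in>V. (G.dg u - \<mu>)^2) \<le> n * Ms / 2 - Ms^2 / n" using var sq by linarith
        also have "\<dots> = (Ms / n) * (n * n / 2 - Ms)" using npos by (simp add: field_simps power2_eq_square)
        also have "\<dots> \<le> (n / 2) * (2 * \<alpha> * n^2)"
        proof (rule mult_mono)
          show "Ms / n \<le> n / 2" using Msle npos by (simp add: field_simps)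
          show "n * n / 2 - Ms \<le> 2 * \<alpha> * n^2" using Ms_ge by (simp add: power2_eq_square)
          show "0 \<le> n / 2" using nn by simp
          show "0 \<le> n * n / 2 - Ms" using Msle by simp
        qed
        also have "\<dots> = \<alpha> * n^3" by (simp add: power2_eq_square power3_eq_cube)
        finally show ?thesis .
      qed
      define L where "L = {u\<in>V. G.dg u < n / 2 - 3/2 * (\<beta> * n)}"
      have LV: "L \<subseteq> V" by (auto simp: L_def)
      have finL: "finite L" using LV G.finV finite_subset by blast
      have mu_ge: "\<mu> \<ge> n / 2 - 2 * \<alpha> * n"
      proof -
        have "Ms / n \<ge> (n^2 / 2 - 2 * \<alpha> * n^2) / n" using Ms_ge npos by (simp add: divide_right_mono)
        also have "(n^2 / 2 - 2 * \<alpha> * n^2) / n = n / 2 - 2 * \<alpha> * n" using npos by (simp add: field_simps power2_eq_square)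
        finally show ?thesis by (simp add: \<mu>_def)
      qed
      have ab: "2 * \<alpha> * n \<le> 1/2 * (\<beta> * n)"
      proof -
        have "\<beta> * \<beta> \<le> (1/40) * (1/40)" using blt bpos by (intro mult_mono) auto
        then have "\<beta>^2 \<le> 1/4" by (simp add: power2_eq_square)
        then have "\<beta>^2 * \<beta> \<le> 1/4 * \<beta>" using bpos by (intro mult_right_mono) auto
        then have "2 * \<alpha> \<le> 1/2 * \<beta>" using b3 by (simp add: power2_eq_square power3_eq_cube)
        then show ?thesis using nn by (simp add: mult_right_mono mult.assoc[symmetric])
      qed
      have Lsq: "(\<beta> * n)^2 \<le> (G.dg u - \<mu>)^2" if "u \<in> L" for u
      proof -
        have "G.dg u < n / 2 - 3/2 * (\<beta> * n)" using that by (simp add: L_def)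
        then have "\<beta> * n \<le> \<mu> - G.dg u" using mu_ge ab by linarith
        then have "(\<beta> * n)^2 \<le> (\<mu> - G.dg u)^2" using bn0 by (intro power_mono) auto
        then show ?thesis by (simp add: power2_commute)
      qed
      have "real (card L) * (\<beta> * n)^2 = (\<Sum>u\<in>L. (\<beta> * n)^2)" by simp
      also have "\<dots> \<le> (\<Sum>u\<in>L. (G.dg u - \<mu>)^2)" using Lsq by (intro sum_mono) auto
      also have "\<dots> \<le> (\<Sum>u\<in>V. (G.dg u - \<mu>)^2)" using LV G.finV by (intro sum_mono2) auto
      also have "\<dots> \<le> \<alpha> * n^3" by (rule varb)
      also have "\<dots> = (\<beta> * n)^2 * (\<beta> * n)" using b3 by (simp add: power2_eq_square power3_eq_cube algebra_simps)
      finally have "real (card L) * (\<beta> * n)^2 \<le> (\<beta> * n) * (\<beta> * n)^2" by (simp add: mult.commute)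
      moreover have "(\<beta> * n)^2 > 0" using bpos npos by simp
      ultimately have cL: "real (card L) \<le> \<beta> * n" by (simp add: mult_le_cancel_right_pos)
      define S where "S = V - L"
      have SV: "S \<subseteq> V" by (auto simp: S_def)
      have finS: "finite S" using SV G.finV finite_subset by blast
      have cS: "real (card S) = n - real (card L)"
        using card_Diff_subset[OF finL LV] card_mono[OF G.finV LV] by (simp add: S_def n_def of_nat_diff)
      have dgS: "G.dg v \<ge> n / 2 - 3/2 * (\<beta> * n)" if "v \<in> S" for v
        using that by (auto simp: S_def L_def)
      have degS: "real (deg_in S E v) \<ge> n / 2 - 5/2 * (\<beta> * n)" if "v \<in> S" for v
      proof -
        have "{u\<in>V. E v u} \<subseteq> {u\<in>S. E v u} \<union> L" by (auto simp: S_def)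
        then have "card {u\<in>V. E v u} \<le> card ({u\<in>S. E v u} \<union> L)"
          by (intro card_mono) (use finS finL in auto)
        also have "\<dots> \<le> card {u\<in>S. E v u} + card L" by (rule card_Un_le)
        finally have "G.dg v \<le> real (deg_in S E v) + real (card L)"
          by (simp add: G.dg_def G.nb_def deg_in_def)
        then show ?thesis using dgS[OF that] cL by linarith
      qed
      have tf: "\<not> (E u v \<and> E v w \<and> E u w)" if "u \<in> S" "v \<in> S" "w \<in> S" for u v w
      proof
        assume T: "E u v \<and> E v w \<and> E u w"
        have "G.dg u + G.dg v + G.dg w \<le> n + G.cm u v + G.cm v w + G.cm u w"
          using G.tri_ineq by (simp add: n_def)
        moreover have "G.cm u v \<le> n / 6 - 2 * (\<beta> * n)" "G.cm v w \<le> n / 6 - 2 * (\<beta> * n)"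
          "G.cm u w \<le> n / 6 - 2 * (\<beta> * n)" using cmB T by auto
        moreover have "\<beta> * n > 0" using bpos npos by simp
        moreover have "n / 2 - 3 / 2 * (\<beta> * n) \<le> G.dg u" "n / 2 - 3 / 2 * (\<beta> * n) \<le> G.dg v"
          "n / 2 - 3 / 2 * (\<beta> * n) \<le> G.dg w" using dgS that by auto
        ultimately show False by linarith
      qed
      have big: "3 * real (card S) < 7 * (n / 2 - 5/2 * (\<beta> * n))"
      proof -
        have "\<beta> * n < 1/40 * n" using blt npos by (intro mult_strict_right_mono) auto
        moreover have "real (card S) \<le> n" using cS by simp
        moreover have "7 * (n / 2 - 5/2 * (\<beta> * n)) = 7/2 * n - 35/2 * (\<beta> * n)" by (simp add: algebra_simps)
        ultimately show ?thesis using npos by linarith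
      qed
      have bipS: "induced_bipartite S E"
      proof (rule bip[OF finS _ _ _ big])
        show "\<And>u v. E u v \<Longrightarrow> E v u" by (rule G.symE)
        show "\<And>u v w. u \<in> S \<Longrightarrow> v \<in> S \<Longrightarrow> w \<in> S \<Longrightarrow> \<not> (E u v \<and> E v w \<and> E u w)"
          by (rule tf)
        show "\<And>v. v \<in> S \<Longrightarrow> n / 2 - 5/2 * (\<beta> * n) \<le> real (card {u\<in>S. E v u})"
          using degS by (simp add: deg_in_def)
      qed
      have "real (card S) \<ge> n - \<beta> * n" using cS cL by linarith
      moreover have "\<forall>v\<in>S. real (deg_in S E v) \<ge> n / 2 - 4 * (\<beta> * n)"
      proof
        fix v assume "v \<in> S"
        then show "real (deg_in S E v) \<ge> n / 2 - 4 * (\<beta> * n)" using degS bn0 by force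
      qed
      ultimately show ?thesis using SV bipS by blast
    qed
  qed
  have e1: "(1/6 - 2 * \<beta>) * n = n / 6 - 2 * (\<beta> * n)" by (simp add: algebra_simps)
  have e2: "(1 - \<beta>) * n = n - \<beta> * n" by (simp add: algebra_simps)
  have e3: "(1/2 - 4 * \<beta>) * n = n / 2 - 4 * (\<beta> * n)" by (simp add: algebra_simps)
  show ?thesis unfolding \<beta>_def[symmetric] n_def[symmetric] bk_def[symmetric] e1 e2 e3 by (rule goal)
qed

end
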